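(* Fix $d\ge 1$ and $\boldsymbol\theta_0\in\Theta_1$. Define $N_\infty:\Theta_1\to\mathbb R$ by $$N_\infty(\boldsymbol\theta)=\frac{\boldsymbol\theta^\top\boldsymbol\theta}{2}-\mathbb E_{\mathbf X\sim N_d(\boldsymbol\theta_0,\mathbf I_d)}\log\cosh(\boldsymbol\theta^\top\mathbf X).$$ Then $N_\infty$ is differentiable on $\mathrm{int}(\Theta_1)$, $N_\infty$ is uniquely minimized over $\Theta_1$ at $\boldsymbol\theta=\boldsymbol\theta_0$, and $\boldsymbol\theta_0$ is the unique solution of $\nabla N_\infty(\boldsymbol\theta)=\mathbf 0_d$ in $\mathrm{int}(\Theta_1)$.
   Context: $\Theta=\mathbb R^d\setminus\{\mathbf 0\}$. $\Theta_1$ is the "lexicographically positive" half-space $\{\theta_1>0\}\cup\{\theta_1=0,\theta_2>0\}\cup\cdots\cup\{\theta_1=\cdots=\theta_{d-1}=0,\theta_d>0\}$, and $\Theta_2=-\Theta_1$, so $\Theta=\Theta_1\cup\Theta_2$. *)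

theory Defs
  imports "HOL-Probability.Probability"
begin

text \<open>Vectors in R^d are modelled as \<open>real ^ 'n\<close> where the index type \<open>'n\<close> is finite
  and linearly ordered; the order on \<open>'n\<close> gives the coordinate order 1,...,d used by
  the lexicographic half-space.\<close>

definition Theta1 :: "(real ^ 'n::{finite,linorder}) set" where
  "Theta1 = {\<theta>. \<exists>k. \<theta> $ k > 0 \<and> (\<forall>j. j < k \<longrightarrow> \<theta> $ j = 0)}"

definition gauss_Id :: "real ^ 'n::finite \<Rightarrow> (real ^ 'n) measure" where
  "gauss_Id \<mu> = density lborel (\<lambda>x. ennreal (\<Prod>i\<in>UNIV. normal_density (\<mu> $ i) 1 (x $ i)))"

definition N_inf :: "real ^ 'n::finite \<Rightarrow> real ^ 'n \<Rightarrow> real" where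
  "N_inf \<theta>0 \<theta> = (\<theta> \<bullet> \<theta>) / 2 - (\<integral>x. ln (cosh (\<theta> \<bullet> x)) \<partial>gauss_Id \<theta>0)"

end

theory Submission
  imports Defs
begin

definition pd :: "real^'n::finite \<Rightarrow> real^'n \<Rightarrow> real" where
  "pd \<mu> x = (\<Prod>i\<in>UNIV. normal_density (\<mu> $ i) 1 (x $ i))"

lemma pd_alt: "pd \<mu> x = (1 / sqrt (2*pi)) ^ CARD('n) * exp (- ((x - \<mu>) \<bullet> (x - \<mu>)) / 2)"
  for \<mu> x :: "real^'n::finite"
proof -
  have "pd \<mu> x = (\<Prod>i\<in>UNIV. (1 / sqrt (2*pi)) * exp (- ((x$i - \<mu>$i)^2) / 2))"
    unfolding pd_def normal_density_def by simp
  also have "\<dots> = (1 / sqrt (2*pi)) ^ CARD('n) * exp (\<Sum>i\<in>UNIV. - ((x$i - \<mu>$i)^2) / 2)"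
    by (simp only: exp_sum[OF finite] finite prod.distrib prod_constant)
  also have "(\<Sum>i\<in>UNIV. - ((x$i - \<mu>$i)^2) / 2) = - ((x - \<mu>) \<bullet> (x - \<mu>)) / 2"
    by (simp add: inner_vec_def sum_divide_distrib[symmetric] sum_negf power2_eq_square)
  finally show ?thesis .
qed

lemma pd_nonneg: "0 \<le> pd \<mu> x"
  by (simp add: pd_def prod_nonneg)

lemma pd_pos: "0 < pd \<mu> x"
  by (simp add: pd_def prod_pos normal_density_pos)

lemma pd_meas[measurable]: "pd \<mu> \<in> borel_measurable borel"
  unfolding pd_def by measurable

lemma pd_cont: "continuous_on UNIV (pd \<mu>)"
  unfolding pd_alt by (intro continuous_intros) auto

lemma nn_pd: "(\<integral>\<^sup>+x. ennreal (pd \<mu> x) \<partial>lborel) = 1"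
  for \<mu> :: "real^'n::finite"
proof -
  let ?f = "\<lambda>b::real^'n. \<lambda>y. ennreal (normal_density (\<mu> \<bullet> b) 1 y)"
  have Bvec: "(Basis :: (real^'n) set) = range (\<lambda>i. axis i 1)"
    by (auto simp: Basis_vec_def)
  have eq: "(\<lambda>x. ennreal (pd \<mu> x)) = (\<lambda>x. \<Prod>b\<in>Basis. ?f b (x \<bullet> b))"
  proof
    fix x :: "real^'n"
    have "(\<Prod>b\<in>Basis. ?f b (x \<bullet> b)) = (\<Prod>i\<in>UNIV. ?f (axis i 1) (x \<bullet> axis i 1))"
      unfolding Bvec
      by (subst prod.reindex) (auto simp: inj_on_def axis_eq_axis)
    also have "\<dots> = ennreal (pd \<mu> x)"
      by (simp add: pd_def prod_ennreal inner_axis)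
    finally show "ennreal (pd \<mu> x) = (\<Prod>b\<in>Basis. ?f b (x \<bullet> b))" by simp
  qed
  have "(\<integral>\<^sup>+x. ennreal (pd \<mu> x) \<partial>lborel) = (\<integral>\<^sup>+x. (\<Prod>b\<in>Basis. ?f b (x \<bullet> b)) \<partial>lborel)"
    by (simp add: eq)
  also have "(\<integral>\<^sup>+x. (\<Prod>b\<in>Basis. ?f b (x \<bullet> b)) \<partial>lborel) = (\<Prod>b\<in>(Basis::(real^'n) set). (\<integral>\<^sup>+y. ?f b y \<partial>lborel))"
    by (rule nn_integral_lborel_prod) auto
  also have "\<dots> = 1"
    by (intro prod.neutral ballI) (simp add: nn_integral_eq_integral)
  finally show ?thesis .
qed

lemma gauss_eq: "gauss_Id \<mu> = density lborel (\<lambda>x. ennreal (pd \<mu> x))"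
  for \<mu> :: "real^'n::finite"
  unfolding gauss_Id_def pd_def ..

lemma sets_gauss[simp, measurable_cong]: "sets (gauss_Id \<mu>) = sets borel"
  by (simp add: gauss_eq)

lemma space_gauss[simp]: "space (gauss_Id \<mu>) = UNIV"
  by (simp add: gauss_eq)

lemma prob_gauss: "prob_space (gauss_Id \<mu>)"
  by (rule prob_spaceI) (simp add: gauss_eq emeasure_density nn_pd)

lemma pd_shift: "pd \<mu> (x + \<mu>) = pd 0 x"
  by (simp add: pd_alt)

lemma pd_neg: "pd 0 (- x) = pd 0 x"
  by (simp add: pd_alt)

lemma pd_tilt: "pd (\<mu> + v) x = pd \<mu> x * exp (v \<bullet> (x - \<mu>) - v \<bullet> v / 2)"
proof -
  have "- ((x - (\<mu> + v)) \<bullet> (x - (\<mu> + v))) / 2 = - ((x - \<mu>) \<bullet> (x - \<mu>)) / 2 + (v \<bullet> (x - \<mu>) - v \<bullet> v / 2)"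
    by (simp add: inner_diff_left inner_diff_right inner_add_left inner_add_right inner_commute field_simps)
  then have "exp (- ((x - (\<mu> + v)) \<bullet> (x - (\<mu> + v))) / 2) = exp (- ((x - \<mu>) \<bullet> (x - \<mu>)) / 2) * exp (v \<bullet> (x - \<mu>) - v \<bullet> v / 2)"
    by (simp only: exp_add[symmetric])
  then show ?thesis
    unfolding pd_alt by simp
qed

lemma nn_lborel_shift:
  fixes g :: "real^'n::finite \<Rightarrow> ennreal"
  assumes [measurable]: "g \<in> borel_measurable borel"
  shows "(\<integral>\<^sup>+x. g x \<partial>lborel) = (\<integral>\<^sup>+x. g (x + c) \<partial>lborel)"
proof -
  have "(\<integral>\<^sup>+x. g x \<partial>lborel) = (\<integral>\<^sup>+x. g x \<partial>distr lborel borel ((+) c))"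
    by (simp add: lborel_distr_plus)
  also have "\<dots> = (\<integral>\<^sup>+x. g (c + x) \<partial>lborel)"
    by (subst nn_integral_distr) auto
  finally show ?thesis by (simp add: add.commute)
qed

lemma lborel_uminus: "distr lborel borel uminus = (lborel :: (real^'n::finite) measure)"
proof -
  have "(lborel :: (real^'n::finite) measure) = density (distr lborel borel (\<lambda>x. - x)) (\<lambda>_. 1)"
    using lborel_affine[of "-1" "0::real^'n"] by simp
  then show ?thesis
    by (simp add: density_1)
qed

lemma nn_lborel_neg:
  fixes g :: "real^'n::finite \<Rightarrow> ennreal"
  assumes [measurable]: "g \<in> borel_measurable borel"
  shows "(\<integral>\<^sup>+x. g x \<partial>lborel) = (\<integral>\<^sup>+x. g (- x) \<partial>lborel)"
proof -
  have "(\<integral>\<^sup>+x. g x \<partial>lborel) = (\<integral>\<^sup>+x. g x \<partial>distr lborel borel uminus)"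
    by (simp add: lborel_uminus)
  also have "\<dots> = (\<integral>\<^sup>+x. g (- x) \<partial>lborel)"
    by (subst nn_integral_distr) auto
  finally show ?thesis .
qed

lemma gauss_shift: "gauss_Id \<mu> = distr (gauss_Id 0) borel (\<lambda>y. y + \<mu>)"
  for \<mu> :: "real^'n::finite"
proof (rule measure_eqI)
  fix A :: "(real^'n) set" assume A: "A \<in> sets (gauss_Id \<mu>)"
  then have [measurable]: "A \<in> sets borel" by simp
  have "emeasure (gauss_Id \<mu>) A = (\<integral>\<^sup>+x. ennreal (pd \<mu> x) * indicator A x \<partial>lborel)"
    by (simp add: gauss_eq emeasure_density)
  also have "\<dots> = (\<integral>\<^sup>+x. ennreal (pd \<mu> (x + \<mu>)) * indicator A (x + \<mu>) \<partial>lborel)"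
    by (rule nn_lborel_shift) measurable
  also have "\<dots> = emeasure (distr (gauss_Id 0) borel (\<lambda>y. y + \<mu>)) A"
    apply (simp add: emeasure_distr gauss_eq)
    apply (subst emeasure_density)
      apply simp
    using measurable_sets[of "\<lambda>y::real^'n. y + \<mu>" borel borel A] apply simp
    apply (auto intro!: nn_integral_cong simp: pd_shift indicator_def)
    done
  finally show "emeasure (gauss_Id \<mu>) A = emeasure (distr (gauss_Id 0) borel (\<lambda>y. y + \<mu>)) A" .
qed simp

lemma gauss_neg: "gauss_Id 0 = distr (gauss_Id (0::real^'n::finite)) borel uminus"
proof (rule measure_eqI)
  fix A :: "(real^'n) set" assume A: "A \<in> sets (gauss_Id 0)"
  then have [measurable]: "A \<in> sets borel" by simp
  have "emeasure (gauss_Id 0) A = (\<integral>\<^sup>+x. ennreal (pd 0 x) * indicator A x \<partial>lborel)"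
    by (simp add: gauss_eq emeasure_density)
  also have "\<dots> = (\<integral>\<^sup>+x. ennreal (pd 0 (- x)) * indicator A (- x) \<partial>lborel)"
    by (rule nn_lborel_neg) measurable
  also have "\<dots> = emeasure (distr (gauss_Id 0) borel uminus) A"
    apply (simp add: emeasure_distr gauss_eq)
    apply (subst emeasure_density)
      apply simp
    using measurable_sets[of "uminus::real^'n \<Rightarrow> _" borel borel A] apply simp
    apply (auto intro!: nn_integral_cong simp: pd_neg indicator_def)
    done
  finally show "emeasure (gauss_Id 0) A = emeasure (distr (gauss_Id 0) borel uminus) A" .
qed simp

lemma gauss_tilt: "gauss_Id (\<mu> + v) = density (gauss_Id \<mu>) (\<lambda>x. ennreal (exp (v \<bullet> (x - \<mu>) - v \<bullet> v / 2)))"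
proof -
  have "density (gauss_Id \<mu>) (\<lambda>x. ennreal (exp (v \<bullet> (x - \<mu>) - v \<bullet> v / 2)))
     = density lborel (\<lambda>x. ennreal (pd \<mu> x) * ennreal (exp (v \<bullet> (x - \<mu>) - v \<bullet> v / 2)))"
    unfolding gauss_eq by (subst density_density_eq) auto
  also have "\<dots> = density lborel (\<lambda>x. ennreal (pd (\<mu> + v) x))"
    by (simp add: pd_tilt ennreal_mult pd_nonneg)
  finally show ?thesis by (simp add: gauss_eq)
qed

lemma taylor2:
  fixes f f' f'' :: "real \<Rightarrow> real"
  assumes d1: "\<And>y. (f has_real_derivative f' y) (at y)"
    and d2: "\<And>y. (f' has_real_derivative f'' y) (at y)"
    and bd: "\<And>y. \<bar>y - a\<bar> \<le> \<bar>s\<bar> \<Longrightarrow> \<bar>f'' y\<bar> \<le> M"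
  shows "\<bar>f (a + s) - f a - s * f' a\<bar> \<le> M * s\<^sup>2"
proof (cases "s = 0")
  case True then show ?thesis using bd[of a] by simp
next
  case False
  define diff where "diff = (\<lambda>m::nat. if m = 0 then f else if m = 1 then f' else f'')"
  have "\<exists>t. (if a + s < a then a + s < t \<and> t < a else a < t \<and> t < a + s) \<and>
    f (a + s) = (\<Sum>m<2. (diff m a / fact m) * (a + s - a)^m) + (diff 2 t / fact 2) * (a + s - a)^2"
    by (rule Taylor[where a="min a (a+s)" and b="max a (a+s)"])
       (use False in \<open>auto simp: diff_def d1 d2\<close>)
  then obtain t where t0: "(if a + s < a then a + s < t \<and> t < a else a < t \<and> t < a + s)" and
    eq: "f (a + s) = (\<Sum>m<2. (diff m a / fact m) * (a + s - a)^m) + (diff 2 t / fact 2) * (a + s - a)^2"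
    by blast
  from t0 have t: "\<bar>t - a\<bar> \<le> \<bar>s\<bar>" by (auto split: if_splits)
  have "f (a + s) = f a + f' a * s + f'' t / 2 * s^2"
    using eq by (simp add: diff_def numeral_2_eq_2)
  then have "\<bar>f (a + s) - f a - s * f' a\<bar> = \<bar>f'' t\<bar> / 2 * s^2"
    by (simp add: abs_mult algebra_simps)
  also have "\<dots> \<le> M / 2 * s^2"
    using bd[OF t] by (intro mult_right_mono divide_right_mono) auto
  also have "\<dots> \<le> M * s^2"
    using bd[of a] by (intro mult_right_mono) auto
  finally show ?thesis .
qed

lemma cosh_pos_real: "0 < cosh (x::real)"
  by (simp add: cosh_real_pos)

lemma deriv_lncosh: "((\<lambda>y. ln (cosh y)) has_real_derivative tanh y) (at (y::real))"
proof -
  have "((\<lambda>y. ln (cosh y)) has_real_derivative (1 / cosh y) * sinh y) (at y)"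
    by (rule DERIV_chain2[of ln]) (auto intro!: derivative_eq_intros simp: cosh_pos_real)
  then show ?thesis by (simp add: tanh_def)
qed

lemma deriv_tanh: "(tanh has_real_derivative 1 - (tanh y)\<^sup>2) (at (y::real))"
proof -
  have "((\<lambda>x. tanh x) has_real_derivative (1 - (tanh y)\<^sup>2) * 1) (at (y::real))"
    by (rule has_field_derivative_tanh) (auto intro!: derivative_eq_intros simp: cosh_pos_real[THEN less_imp_neq, symmetric])
  then show ?thesis by simp
qed

lemma deriv_tanh': "((\<lambda>y. 1 - (tanh y)\<^sup>2) has_real_derivative - 2 * tanh y * (1 - (tanh y)\<^sup>2)) (at (y::real))"
  by (auto intro!: derivative_eq_intros deriv_tanh simp: power2_eq_square)

lemma tanh_abs_le: "\<bar>tanh (y::real)\<bar> \<le> 1"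
  using tanh_real_bounds[of y] by (auto simp: abs_le_iff)

lemma tanh_sq_le: "(tanh (y::real))\<^sup>2 \<le> 1"
  using tanh_abs_le[of y] by (simp add: abs_square_le_1)

lemma taylor_lncosh: "\<bar>ln (cosh ((a::real) + s)) - ln (cosh a) - s * tanh a\<bar> \<le> 1 * s\<^sup>2"
proof (rule taylor2[OF deriv_lncosh deriv_tanh])
  fix y :: real
  show "\<bar>1 - (tanh y)\<^sup>2\<bar> \<le> 1" using tanh_sq_le[of y] by auto
qed

lemma taylor_tanh: "\<bar>tanh ((a::real) + s) - tanh a - s * (1 - (tanh a)\<^sup>2)\<bar> \<le> 2 * s\<^sup>2"
proof (rule taylor2[OF deriv_tanh deriv_tanh'])
  fix y :: real
  have "\<bar>tanh y\<bar> \<le> 1" using tanh_abs_le by auto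
  moreover have "0 \<le> 1 - (tanh y)\<^sup>2" "1 - (tanh y)\<^sup>2 \<le> 1" using tanh_sq_le[of y] by auto
  ultimately have "\<bar>tanh y\<bar> * \<bar>1 - (tanh y)\<^sup>2\<bar> \<le> 1 * 1"
    by (intro mult_mono) auto
  then show "\<bar>- 2 * tanh y * (1 - (tanh y)\<^sup>2)\<bar> \<le> 2"
    by (simp add: abs_mult)
qed

lemma taylor_exp: "\<bar>exp (s::real) - 1 - s\<bar> \<le> exp \<bar>s\<bar> * s\<^sup>2"
  using taylor2[of exp exp exp 0 s "exp \<bar>s\<bar>"]
  by (auto intro!: DERIV_exp)

lemma E_shift: "f \<in> borel_measurable borel \<Longrightarrow>
   integral\<^sup>L (gauss_Id \<mu>) f = integral\<^sup>L (gauss_Id 0) (\<lambda>y. f (y + \<mu>))"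
  for f :: "real^'n::finite \<Rightarrow> real"
  by (subst gauss_shift) (simp add: integral_distr)

lemma I_shift: "f \<in> borel_measurable borel \<Longrightarrow>
   integrable (gauss_Id \<mu>) f \<longleftrightarrow> integrable (gauss_Id 0) (\<lambda>y. f (y + \<mu>))"
  for f :: "real^'n::finite \<Rightarrow> real"
  by (subst gauss_shift) (simp add: integrable_distr_eq)

lemma E_neg: "f \<in> borel_measurable borel \<Longrightarrow>
   integral\<^sup>L (gauss_Id 0) f = integral\<^sup>L (gauss_Id 0) (\<lambda>y. f (- y))"
  for f :: "real^'n::finite \<Rightarrow> real"
  by (subst gauss_neg) (simp add: integral_distr)

lemma E_tilt: "f \<in> borel_measurable borel \<Longrightarrow>
   integral\<^sup>L (gauss_Id (\<mu> + v)) f = integral\<^sup>L (gauss_Id \<mu>) (\<lambda>x. exp (v \<bullet> (x - \<mu>) - v \<bullet> v / 2) * f x)"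
  for f :: "real^'n::finite \<Rightarrow> real"
  by (subst gauss_tilt) (simp add: integral_density)

lemma I_tilt: "f \<in> borel_measurable borel \<Longrightarrow>
   integrable (gauss_Id (\<mu> + v)) f \<longleftrightarrow> integrable (gauss_Id \<mu>) (\<lambda>x. exp (v \<bullet> (x - \<mu>) - v \<bullet> v / 2) * f x)"
  for f :: "real^'n::finite \<Rightarrow> real"
  by (subst gauss_tilt) (simp add: integrable_density)

lemma E_tilt0: "f \<in> borel_measurable borel \<Longrightarrow>
   integral\<^sup>L (gauss_Id \<mu>) f = integral\<^sup>L (gauss_Id 0) (\<lambda>x. exp (\<mu> \<bullet> x - \<mu> \<bullet> \<mu> / 2) * f x)"
  for f :: "real^'n::finite \<Rightarrow> real"
  using E_tilt[of f 0 \<mu>] by simp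

lemma int_one: "integrable (gauss_Id \<mu>) (\<lambda>_. c::real)"
proof -
  interpret prob_space "gauss_Id \<mu>" by (rule prob_gauss)
  show ?thesis by simp
qed

lemma E_one: "integral\<^sup>L (gauss_Id \<mu>) (\<lambda>_. 1::real) = 1"
proof -
  interpret prob_space "gauss_Id \<mu>" by (rule prob_gauss)
  show ?thesis using prob_space by simp
qed

lemma measure_gauss_UNIV[simp]: "Sigma_Algebra.measure (gauss_Id \<mu>) UNIV = 1"
  using E_one[of \<mu>] by simp

lemma int_exp: "integrable (gauss_Id \<mu>) (\<lambda>x. exp (v \<bullet> x))"
  for \<mu> v :: "real^'n::finite"
proof -
  have "integrable (gauss_Id \<mu>) (\<lambda>x. exp (v \<bullet> (x - \<mu>) - v \<bullet> v / 2) * 1)"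
    using int_one[of "\<mu> + v"] by (subst (asm) I_tilt) auto
  then have i: "integrable (gauss_Id \<mu>) (\<lambda>x. exp (v \<bullet> \<mu> + v \<bullet> v / 2) * (exp (v \<bullet> (x - \<mu>) - v \<bullet> v / 2) * 1))"
    by (rule integrable_mult_right)
  have eq: "\<And>x. exp (v \<bullet> \<mu> + v \<bullet> v / 2) * (exp (v \<bullet> (x - \<mu>) - v \<bullet> v / 2) * 1) = exp (v \<bullet> x)"
    by (simp add: exp_add[symmetric] inner_diff_right)
  from i show ?thesis by (simp only: eq)
qed

lemma E_exp0: "integral\<^sup>L (gauss_Id 0) (\<lambda>x. exp (v \<bullet> x)) = exp (v \<bullet> v / 2)"
  for v :: "real^'n::finite"
proof -
  have "1 = integral\<^sup>L (gauss_Id (0 + v)) (\<lambda>_. 1::real)" by (rule E_one[symmetric])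
  also have "\<dots> = integral\<^sup>L (gauss_Id 0) (\<lambda>x. exp (- (v \<bullet> v / 2)) * exp (v \<bullet> x))"
    by (subst E_tilt) (auto simp: exp_add[symmetric])
  also have "\<dots> = exp (- (v \<bullet> v / 2)) * integral\<^sup>L (gauss_Id 0) (\<lambda>x. exp (v \<bullet> x))"
    by simp
  finally show ?thesis by (simp add: exp_minus field_simps)
qed

lemma E_odd: "f \<in> borel_measurable borel \<Longrightarrow> (\<And>x. f (- x) = - f x) \<Longrightarrow>
   integral\<^sup>L (gauss_Id 0) f = 0"
  for f :: "real^'n::finite \<Rightarrow> real"
  using E_neg[of f] by simp

lemma cont_meas: "continuous_on UNIV f \<Longrightarrow> f \<in> borel_measurable borel"
  by (rule borel_measurable_continuous_onI)

lemma E_pos: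
  fixes f :: "real^'n::finite \<Rightarrow> real"
  assumes c: "continuous_on UNIV f" and nn: "\<And>x. 0 \<le> f x" and int: "integrable (gauss_Id \<mu>) f"
    and x0: "0 < f x0"
  shows "0 < integral\<^sup>L (gauss_Id \<mu>) f"
proof (rule ccontr)
  have [measurable]: "f \<in> borel_measurable borel" by (rule cont_meas[OF c])
  assume "\<not> 0 < integral\<^sup>L (gauss_Id \<mu>) f"
  moreover have "0 \<le> integral\<^sup>L (gauss_Id \<mu>) f" by (rule integral_nonneg_AE) (simp add: nn)
  ultimately have "integral\<^sup>L (gauss_Id \<mu>) f = 0" by simp
  then have "AE x in gauss_Id \<mu>. f x = 0"
    using integral_nonneg_eq_0_iff_AE[OF int] nn by simp
  then have "AE x in lborel. 0 < ennreal (pd \<mu> x) \<longrightarrow> f x = 0"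
    unfolding gauss_eq by (subst (asm) AE_density) auto
  then have "AE x in lborel. f x = 0"
    by (rule AE_mp) (auto intro!: AE_I2 simp: pd_pos)
  then have "AE x in lebesgue. x \<in> {x. f x = 0}"
    by (intro AE_completion) simp
  moreover have "closed {x. f x = 0}"
    using continuous_closed_preimage_constant[OF c closed_UNIV, of 0] by simp
  ultimately have "x0 \<in> {x. f x = 0}"
    by (rule mem_closed_if_AE_lebesgue[rotated])
  with x0 show False by simp
qed

lemma abs_le_exp_abs: "\<bar>y::real\<bar> \<le> exp \<bar>y\<bar>"
  using exp_ge_add_one_self[of "\<bar>y\<bar>"] by linarith

lemma sq_le_exp_abs: "(y::real)\<^sup>2 \<le> exp (2 * \<bar>y\<bar>)"
proof -
  have "\<bar>y\<bar> * \<bar>y\<bar> \<le> exp \<bar>y\<bar> * exp \<bar>y\<bar>"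
    using abs_le_exp_abs[of y] by (intro mult_mono) auto
  then show ?thesis by (simp add: power2_eq_square exp_add[symmetric] abs_mult[symmetric])
qed

lemma int_expabs: "integrable (gauss_Id \<mu>) (\<lambda>x. exp \<bar>w \<bullet> x\<bar>)"
  for \<mu> w :: "real^'n::finite"
proof (rule Bochner_Integration.integrable_bound)
  show "integrable (gauss_Id \<mu>) (\<lambda>x. exp (w \<bullet> x) + exp ((- w) \<bullet> x))"
    by (intro Bochner_Integration.integrable_add int_exp)
  show "(\<lambda>x. exp \<bar>w \<bullet> x\<bar>) \<in> borel_measurable (gauss_Id \<mu>)"
    by simp
  show "AE x in gauss_Id \<mu>. norm (exp \<bar>w \<bullet> x\<bar>) \<le> norm (exp (w \<bullet> x) + exp ((- w) \<bullet> x))"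
  proof (intro AE_I2)
    fix x
    show "norm (exp \<bar>w \<bullet> x\<bar>) \<le> norm (exp (w \<bullet> x) + exp ((- w) \<bullet> x))"
    proof -
      have a: "0 < exp (w \<bullet> x)" "0 < exp (- (w \<bullet> x))" by auto
      have "exp \<bar>w \<bullet> x\<bar> \<le> exp (w \<bullet> x) + exp (- (w \<bullet> x))"
        by (cases "w \<bullet> x < 0") (use a in auto)
      then show ?thesis using a by simp
    qed
  qed
qed

lemma int_bound:
  fixes f :: "real^'n::finite \<Rightarrow> real"
  assumes "f \<in> borel_measurable borel" "\<And>x. \<bar>f x\<bar> \<le> C * exp \<bar>w \<bullet> x\<bar> + D"
  shows "integrable (gauss_Id \<mu>) f"
proof (rule Bochner_Integration.integrable_bound)
  show "integrable (gauss_Id \<mu>) (\<lambda>x. C * exp \<bar>w \<bullet> x\<bar> + D)"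
    by (intro Bochner_Integration.integrable_add Bochner_Integration.integrable_mult_right int_expabs int_one)
  show "f \<in> borel_measurable (gauss_Id \<mu>)" using assms(1) by simp
  show "AE x in gauss_Id \<mu>. norm (f x) \<le> norm (C * exp \<bar>w \<bullet> x\<bar> + D)"
  proof (intro AE_I2)
    fix x
    have "\<bar>f x\<bar> \<le> C * exp \<bar>w \<bullet> x\<bar> + D" by (rule assms(2))
    also have "\<dots> \<le> \<bar>C * exp \<bar>w \<bullet> x\<bar> + D\<bar>" by (rule abs_ge_self)
    finally show "norm (f x) \<le> norm (C * exp \<bar>w \<bullet> x\<bar> + D)" by simp
  qed
qed

lemma int_bounded:
  fixes f :: "real^'n::finite \<Rightarrow> real"
  assumes "f \<in> borel_measurable borel" "\<And>x. \<bar>f x\<bar> \<le> D"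
  shows "integrable (gauss_Id \<mu>) f"
  using assms by (intro int_bound[where C=0 and D=D]) auto

lemma int_lin: "integrable (gauss_Id \<mu>) (\<lambda>x. f x * (v \<bullet> x))"
  if "f \<in> borel_measurable borel" "\<And>x. \<bar>f x\<bar> \<le> 1" for v :: "real^'n::finite"
proof (rule int_bound[where C=1 and D=0 and w=v])
  fix x
  have "\<bar>f x\<bar> * \<bar>v \<bullet> x\<bar> \<le> 1 * exp \<bar>v \<bullet> x\<bar>"
    using that(2)[of x] abs_le_exp_abs[of "v \<bullet> x"] by (intro mult_mono) auto
  then show "\<bar>f x * (v \<bullet> x)\<bar> \<le> 1 * exp \<bar>v \<bullet> x\<bar> + 0" by (simp add: abs_mult)
qed (use that in simp)

lemma int_sq: "integrable (gauss_Id \<mu>) (\<lambda>x. (v \<bullet> x)\<^sup>2)" for v :: "real^'n::finite"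
proof (rule int_bound[where C=1 and D=0 and w="2 *\<^sub>R v"])
  fix x
  show "\<bar>(v \<bullet> x)\<^sup>2\<bar> \<le> 1 * exp \<bar>(2 *\<^sub>R v) \<bullet> x\<bar> + 0"
    using sq_le_exp_abs[of "v \<bullet> x"] by (simp add: abs_mult)
qed simp

lemma deriv_zero_lemma:
  fixes d K :: real
  assumes "\<And>t. 0 < t \<Longrightarrow> t \<le> 1 \<Longrightarrow> \<bar>t * d\<bar> \<le> K * t\<^sup>2"
  shows "d = 0"
proof (rule ccontr)
  assume "d \<noteq> 0"
  define t where "t = min 1 (\<bar>d\<bar> / (2 * (\<bar>K\<bar> + 1)))"
  have t: "0 < t" "t \<le> 1" using \<open>d \<noteq> 0\<close> by (auto simp: t_def)
  have "t * \<bar>d\<bar> \<le> K * t\<^sup>2" using assms[OF t] t by (simp add: abs_mult)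
  then have "\<bar>d\<bar> \<le> K * t" using t by (simp add: power2_eq_square)
  also have "\<dots> \<le> \<bar>K\<bar> * t" using t by (intro mult_right_mono) auto
  also have "\<dots> \<le> \<bar>K\<bar> * (\<bar>d\<bar> / (2 * (\<bar>K\<bar> + 1)))"
    by (intro mult_left_mono) (auto simp: t_def)
  also have "\<dots> < \<bar>d\<bar>"
  proof -
    have "\<bar>K\<bar> / (2 * (\<bar>K\<bar> + 1)) < 1" by (simp add: field_simps)
    then have "\<bar>K\<bar> / (2 * (\<bar>K\<bar> + 1)) * \<bar>d\<bar> < 1 * \<bar>d\<bar>"
      using \<open>d \<noteq> 0\<close> by (intro mult_strict_right_mono) auto
    then show ?thesis by simp
  qed
  finally show False by simp
qed

lemma exp_err:
  fixes t W c :: real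
  assumes t: "\<bar>t\<bar> \<le> 1" and c: "0 \<le> c"
  shows "\<bar>exp (t * W - t\<^sup>2 * c) - 1 - t * W\<bar> \<le> t\<^sup>2 * (exp (3 * c) * exp (3 * \<bar>W\<bar>) + c)"
proof -
  define a where "a = t * W - t\<^sup>2 * c"
  have t2: "t\<^sup>2 \<le> 1" using t by (simp add: abs_square_le_1)
  have "\<bar>a\<bar> \<le> \<bar>t\<bar> * \<bar>W\<bar> + t\<^sup>2 * c" unfolding a_def using c by (simp add: abs_mult abs_triangle_ineq4[THEN order_trans])
  also have "\<dots> \<le> 1 * \<bar>W\<bar> + 1 * c" using t t2 c by (intro add_mono mult_right_mono) auto
  finally have a1: "\<bar>a\<bar> \<le> \<bar>W\<bar> + c" by simp
  have "a\<^sup>2 = t\<^sup>2 * (W - t * c)\<^sup>2" unfolding a_def by (simp add: power2_eq_square algebra_simps)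
  also have "(W - t * c)\<^sup>2 \<le> (\<bar>W\<bar> + c)\<^sup>2"
  proof -
    have "\<bar>W - t * c\<bar> \<le> \<bar>W\<bar> + \<bar>t\<bar> * c" using c by (simp add: abs_mult abs_triangle_ineq4[THEN order_trans])
    also have "\<dots> \<le> \<bar>W\<bar> + c" using t c by (simp add: mult_left_le_one_le)
    finally show ?thesis by (simp add: abs_le_square_iff[symmetric] abs_of_nonneg c)
  qed
  then have "t\<^sup>2 * (W - t * c)\<^sup>2 \<le> t\<^sup>2 * (\<bar>W\<bar> + c)\<^sup>2" by (intro mult_left_mono) auto
  finally have a2: "a\<^sup>2 \<le> t\<^sup>2 * (\<bar>W\<bar> + c)\<^sup>2" .
  have "\<bar>exp a - 1 - a\<bar> \<le> exp \<bar>a\<bar> * a\<^sup>2" by (rule taylor_exp)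
  also have "\<dots> \<le> exp (\<bar>W\<bar> + c) * (t\<^sup>2 * (\<bar>W\<bar> + c)\<^sup>2)"
    using a1 a2 by (intro mult_mono) auto
  also have "\<dots> \<le> exp (\<bar>W\<bar> + c) * (t\<^sup>2 * exp (2 * (\<bar>W\<bar> + c)))"
    using sq_le_exp_abs[of "\<bar>W\<bar> + c"] c by (intro mult_left_mono) auto
  also have "\<dots> = t\<^sup>2 * (exp (3 * c) * exp (3 * \<bar>W\<bar>))"
    by (simp add: exp_add[symmetric] algebra_simps)
  finally have b: "\<bar>exp a - 1 - a\<bar> \<le> t\<^sup>2 * (exp (3 * c) * exp (3 * \<bar>W\<bar>))" .
  have e: "exp a - 1 - t * W = (exp a - 1 - a) + (- (t\<^sup>2 * c))" by (simp add: a_def)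
  have "\<bar>exp a - 1 - t * W\<bar> \<le> \<bar>exp a - 1 - a\<bar> + \<bar>- (t\<^sup>2 * c)\<bar>"
    unfolding e by (rule abs_triangle_ineq)
  also have "\<bar>- (t\<^sup>2 * c)\<bar> = t\<^sup>2 * c" using c by simp
  finally have "\<bar>exp a - 1 - t * W\<bar> \<le> \<bar>exp a - 1 - a\<bar> + t\<^sup>2 * c" .
  with b have fin: "\<bar>exp a - 1 - t * W\<bar> \<le> t\<^sup>2 * (exp (3 * c) * exp (3 * \<bar>W\<bar>)) + t\<^sup>2 * c" by linarith
  have "t\<^sup>2 * (exp (3 * c) * exp (3 * \<bar>W\<bar>) + c) = t\<^sup>2 * (exp (3 * c) * exp (3 * \<bar>W\<bar>)) + t\<^sup>2 * c"
    by (simp add: distrib_left)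
  with fin show ?thesis unfolding a_def by linarith
qed

lemma E_abs_le:
  fixes f g :: "real^'n::finite \<Rightarrow> real"
  assumes "integrable (gauss_Id \<mu>) f" "integrable (gauss_Id \<mu>) g" "\<And>x. \<bar>f x\<bar> \<le> g x"
  shows "\<bar>integral\<^sup>L (gauss_Id \<mu>) f\<bar> \<le> integral\<^sup>L (gauss_Id \<mu>) g"
proof -
  have "integral\<^sup>L (gauss_Id \<mu>) f \<le> integral\<^sup>L (gauss_Id \<mu>) g"
    using assms(3) by (intro integral_mono assms(1,2)) (auto simp: abs_le_iff)
  moreover have "integral\<^sup>L (gauss_Id \<mu>) (\<lambda>x. - f x) \<le> integral\<^sup>L (gauss_Id \<mu>) g"
    using assms(3) by (intro integral_mono assms(2) integrable_minus assms(1)) (auto simp: abs_le_iff)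
  ultimately show ?thesis by (simp add: abs_le_iff)
qed

lemma meas_tanh[measurable]: "(\<lambda>x. tanh (\<theta> \<bullet> x + b)) \<in> borel_measurable borel"
  for \<theta> :: "real^'n::finite"
  by (intro cont_meas continuous_intros) (auto simp: cosh_pos_real[THEN less_imp_neq, symmetric])

lemma meas_tanh0[measurable]: "(\<lambda>x. tanh (\<theta> \<bullet> x)) \<in> borel_measurable borel"
  for \<theta> :: "real^'n::finite"
  using meas_tanh[of \<theta> 0] by simp

lemma stein:
  fixes \<mu> \<theta> e :: "real^'n::finite"
  shows "integral\<^sup>L (gauss_Id \<mu>) (\<lambda>x. tanh (\<theta> \<bullet> x) * (e \<bullet> (x - \<mu>)))
       = (\<theta> \<bullet> e) * integral\<^sup>L (gauss_Id \<mu>) (\<lambda>x. 1 - (tanh (\<theta> \<bullet> x))\<^sup>2)"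
proof -
  let ?E = "integral\<^sup>L (gauss_Id \<mu>)"
  define S where "S = ?E (\<lambda>x. 1 - (tanh (\<theta> \<bullet> x))\<^sup>2)"
  define A2 where "A2 = ?E (\<lambda>x. tanh (\<theta> \<bullet> x) * (e \<bullet> (x - \<mu>)))"
  define T0 where "T0 = ?E (\<lambda>x. tanh (\<theta> \<bullet> x))"
  define c where "c = e \<bullet> e / 2"
  have c0: "0 \<le> c" by (simp add: c_def)
  define G where "G = (\<lambda>x. exp (3 * c + 3 * \<bar>e \<bullet> \<mu>\<bar>) * exp \<bar>(3 *\<^sub>R e) \<bullet> x\<bar> + c)"
  have Gm[measurable]: "G \<in> borel_measurable borel" unfolding G_def by measurable
  have intG: "integrable (gauss_Id \<mu>) G"
    unfolding G_def by (intro Bochner_Integration.integrable_add Bochner_Integration.integrable_mult_right int_expabs int_one)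
  have int_t: "integrable (gauss_Id m) (\<lambda>x. tanh (\<theta> \<bullet> x + b))" for m b
    by (rule int_bounded[where D=1]) (auto simp: tanh_abs_le)
  have int_t0: "integrable (gauss_Id m) (\<lambda>x. tanh (\<theta> \<bullet> x))" for m
    using int_t[of m 0] by simp
  have int_s: "integrable (gauss_Id \<mu>) (\<lambda>x. 1 - (tanh (\<theta> \<bullet> x))\<^sup>2)"
    by (rule int_bounded[where D=1]) (use tanh_sq_le in auto)
  have int_w: "integrable (gauss_Id \<mu>) (\<lambda>x. tanh (\<theta> \<bullet> x) * (e \<bullet> (x - \<mu>)))"
  proof -
    have "integrable (gauss_Id \<mu>) (\<lambda>x. tanh (\<theta> \<bullet> x) * (e \<bullet> x) - (e \<bullet> \<mu>) * tanh (\<theta> \<bullet> x))"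
      by (intro Bochner_Integration.integrable_diff Bochner_Integration.integrable_mult_right int_lin int_t0)
         (auto simp: tanh_abs_le)
    then show ?thesis by (simp add: inner_diff_right algebra_simps)
  qed
  have key: "\<bar>t * ((\<theta> \<bullet> e) * S - A2)\<bar> \<le> (2 * (\<theta> \<bullet> e)\<^sup>2 + ?E G) * t\<^sup>2" if t: "0 < t" "t \<le> 1" for t
  proof -
    define P where "P = ?E (\<lambda>x. tanh (\<theta> \<bullet> x + t * (\<theta> \<bullet> e)))"
    have eq1: "integral\<^sup>L (gauss_Id (\<mu> + t *\<^sub>R e)) (\<lambda>x. tanh (\<theta> \<bullet> x)) = P"
    proof -
      have "integral\<^sup>L (gauss_Id (\<mu> + t *\<^sub>R e)) (\<lambda>x. tanh (\<theta> \<bullet> x))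
          = integral\<^sup>L (gauss_Id 0) (\<lambda>y. tanh (\<theta> \<bullet> (y + (\<mu> + t *\<^sub>R e))))"
        by (rule E_shift) simp
      also have "\<dots> = integral\<^sup>L (gauss_Id 0) (\<lambda>y. tanh (\<theta> \<bullet> (y + \<mu>) + t * (\<theta> \<bullet> e)))"
        by (simp add: inner_add_right add.assoc)
      also have "\<dots> = P"
        unfolding P_def by (rule E_shift[symmetric]) simp
      finally show ?thesis .
    qed
    have eq2: "integral\<^sup>L (gauss_Id (\<mu> + t *\<^sub>R e)) (\<lambda>x. tanh (\<theta> \<bullet> x))
       = ?E (\<lambda>x. exp (t * (e \<bullet> (x - \<mu>)) - t\<^sup>2 * c) * tanh (\<theta> \<bullet> x))"
      by (subst E_tilt) (simp_all add: c_def power2_eq_square algebra_simps)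
    have int_e: "integrable (gauss_Id \<mu>) (\<lambda>x. exp (t * (e \<bullet> (x - \<mu>)) - t\<^sup>2 * c) * tanh (\<theta> \<bullet> x))"
    proof -
      have "integrable (gauss_Id \<mu>) (\<lambda>x. exp ((t *\<^sub>R e) \<bullet> (x - \<mu>) - (t *\<^sub>R e) \<bullet> (t *\<^sub>R e) / 2) * tanh (\<theta> \<bullet> x))"
        using int_t0[of "\<mu> + t *\<^sub>R e"] by (subst (asm) I_tilt) auto
      then show ?thesis by (simp add: c_def power2_eq_square algebra_simps)
    qed
    have b1: "\<bar>P - T0 - t * ((\<theta> \<bullet> e) * S)\<bar> \<le> 2 * (\<theta> \<bullet> e)\<^sup>2 * t\<^sup>2"
    proof -
      have "P - T0 - t * ((\<theta> \<bullet> e) * S) = ?E (\<lambda>x. tanh (\<theta> \<bullet> x + t * (\<theta> \<bullet> e)) - tanh (\<theta> \<bullet> x)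
               - (t * (\<theta> \<bullet> e)) * (1 - (tanh (\<theta> \<bullet> x))\<^sup>2))"
        unfolding P_def T0_def S_def
        by (subst Bochner_Integration.integral_diff, intro Bochner_Integration.integrable_diff int_t int_t0,
            intro Bochner_Integration.integrable_mult_right int_s)+
           (simp add: Bochner_Integration.integral_diff[OF int_t int_t0] mult.assoc)
      also have "\<bar>\<dots>\<bar> \<le> ?E (\<lambda>x. 2 * (t * (\<theta> \<bullet> e))\<^sup>2)"
        by (intro E_abs_le taylor_tanh int_one Bochner_Integration.integrable_diff int_t int_t0
            Bochner_Integration.integrable_mult_right int_s)
      also have "\<dots> = 2 * (\<theta> \<bullet> e)\<^sup>2 * t\<^sup>2"
        using E_one[of \<mu>] by (simp add: power_mult_distrib)
      finally show ?thesis .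
    qed
    have b2: "\<bar>P - T0 - t * A2\<bar> \<le> ?E G * t\<^sup>2"
    proof -
      have "P - T0 - t * A2 = ?E (\<lambda>x. tanh (\<theta> \<bullet> x) * (exp (t * (e \<bullet> (x - \<mu>)) - t\<^sup>2 * c) - 1 - t * (e \<bullet> (x - \<mu>))))"
      proof -
        have "?E (\<lambda>x. tanh (\<theta> \<bullet> x) * (exp (t * (e \<bullet> (x - \<mu>)) - t\<^sup>2 * c) - 1 - t * (e \<bullet> (x - \<mu>))))
          = ?E (\<lambda>x. (exp (t * (e \<bullet> (x - \<mu>)) - t\<^sup>2 * c) * tanh (\<theta> \<bullet> x) - tanh (\<theta> \<bullet> x)) - t * (tanh (\<theta> \<bullet> x) * (e \<bullet> (x - \<mu>))))"
          by (rule Bochner_Integration.integral_cong) (simp_all add: algebra_simps)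
        also have "\<dots> = ?E (\<lambda>x. exp (t * (e \<bullet> (x - \<mu>)) - t\<^sup>2 * c) * tanh (\<theta> \<bullet> x) - tanh (\<theta> \<bullet> x)) - ?E (\<lambda>x. t * (tanh (\<theta> \<bullet> x) * (e \<bullet> (x - \<mu>))))"
          by (intro Bochner_Integration.integral_diff Bochner_Integration.integrable_diff int_e int_t0
              Bochner_Integration.integrable_mult_right int_w)
        also have "\<dots> = P - T0 - t * A2"
          unfolding eq1[symmetric] eq2 T0_def A2_def
          by (simp add: Bochner_Integration.integral_diff[OF int_e int_t0])
        finally show ?thesis by simp
      qed
      also have "\<bar>\<dots>\<bar> \<le> ?E (\<lambda>x. t\<^sup>2 * G x)"
      proof (rule E_abs_le)
        show "integrable (gauss_Id \<mu>) (\<lambda>x. tanh (\<theta> \<bullet> x) * (exp (t * (e \<bullet> (x - \<mu>)) - t\<^sup>2 * c) - 1 - t * (e \<bullet> (x - \<mu>))))"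
        proof -
          have "integrable (gauss_Id \<mu>) (\<lambda>x. exp (t * (e \<bullet> (x - \<mu>)) - t\<^sup>2 * c) * tanh (\<theta> \<bullet> x) - tanh (\<theta> \<bullet> x) - t * (tanh (\<theta> \<bullet> x) * (e \<bullet> (x - \<mu>))))"
            by (intro Bochner_Integration.integrable_diff int_e int_t0 Bochner_Integration.integrable_mult_right int_w)
          then show ?thesis by (simp add: algebra_simps)
        qed
        show "integrable (gauss_Id \<mu>) (\<lambda>x. t\<^sup>2 * G x)"
          by (intro Bochner_Integration.integrable_mult_right intG)
        fix x
        define W where "W = e \<bullet> (x - \<mu>)"
        have "\<bar>tanh (\<theta> \<bullet> x) * (exp (t * W - t\<^sup>2 * c) - 1 - t * W)\<bar> \<le> 1 * \<bar>exp (t * W - t\<^sup>2 * c) - 1 - t * W\<bar>"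
          unfolding abs_mult by (intro mult_right_mono tanh_abs_le) auto
        also have "\<dots> \<le> t\<^sup>2 * (exp (3 * c) * exp (3 * \<bar>W\<bar>) + c)"
          using exp_err[of t c W] t c0 by simp
        also have "\<dots> \<le> t\<^sup>2 * G x"
        proof -
          have "\<bar>W\<bar> \<le> \<bar>e \<bullet> x\<bar> + \<bar>e \<bullet> \<mu>\<bar>" unfolding W_def inner_diff_right by linarith
          then have "exp (3 * \<bar>W\<bar>) \<le> exp (3 * \<bar>e \<bullet> \<mu>\<bar>) * exp \<bar>(3 *\<^sub>R e) \<bullet> x\<bar>"
            by (simp add: exp_add[symmetric] abs_mult)
          then have "exp (3 * c) * exp (3 * \<bar>W\<bar>) \<le> exp (3 * c) * (exp (3 * \<bar>e \<bullet> \<mu>\<bar>) * exp \<bar>(3 *\<^sub>R e) \<bullet> x\<bar>)"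
            by (intro mult_left_mono) auto
          then show ?thesis unfolding G_def
            by (intro mult_left_mono) (auto simp: exp_add mult.assoc)
        qed
        finally show "\<bar>tanh (\<theta> \<bullet> x) * (exp (t * (e \<bullet> (x - \<mu>)) - t\<^sup>2 * c) - 1 - t * (e \<bullet> (x - \<mu>)))\<bar> \<le> t\<^sup>2 * G x"
          unfolding W_def .
      qed
      also have "\<dots> = ?E G * t\<^sup>2" by simp
      finally show ?thesis .
    qed
    have "t * ((\<theta> \<bullet> e) * S - A2) = (P - T0 - t * A2) - (P - T0 - t * ((\<theta> \<bullet> e) * S))"
      by (simp add: algebra_simps)
    then have "\<bar>t * ((\<theta> \<bullet> e) * S - A2)\<bar> \<le> \<bar>P - T0 - t * A2\<bar> + \<bar>P - T0 - t * ((\<theta> \<bullet> e) * S)\<bar>"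
      by (simp only: abs_triangle_ineq4)
    with b1 b2 show ?thesis by (simp add: algebra_simps)
  qed
  have "(\<theta> \<bullet> e) * S - A2 = 0"
    by (rule deriv_zero_lemma[OF key])
  then show ?thesis unfolding S_def A2_def by simp
qed

lemma tanh_exp_id: "exp (- y) * (1 + tanh y) = exp y * (1 - tanh (y::real))"
proof -
  have p: "0 < exp y + exp (- y)" by (simp add: add_pos_pos)
  have "tanh y * (exp y + exp (- y)) = exp y - exp (- y)"
    using p by (simp add: tanh_def sinh_def cosh_def field_simps)
  then show ?thesis by (simp add: algebra_simps)
qed

lemma nishimori:
  fixes \<theta>0 :: "real^'n::finite"
  shows "integral\<^sup>L (gauss_Id \<theta>0) (\<lambda>x. tanh (\<theta>0 \<bullet> x) - (tanh (\<theta>0 \<bullet> x))\<^sup>2) = 0"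
proof -
  define c where "c = \<theta>0 \<bullet> \<theta>0 / 2"
  have "integral\<^sup>L (gauss_Id \<theta>0) (\<lambda>x. tanh (\<theta>0 \<bullet> x) - (tanh (\<theta>0 \<bullet> x))\<^sup>2)
     = integral\<^sup>L (gauss_Id 0) (\<lambda>x. exp (\<theta>0 \<bullet> x - c) * (tanh (\<theta>0 \<bullet> x) - (tanh (\<theta>0 \<bullet> x))\<^sup>2))"
    unfolding c_def by (rule E_tilt0) simp
  also have "\<dots> = 0"
  proof (rule E_odd)
    show "(\<lambda>x. exp (\<theta>0 \<bullet> x - c) * (tanh (\<theta>0 \<bullet> x) - (tanh (\<theta>0 \<bullet> x))\<^sup>2)) \<in> borel_measurable borel"
      by measurable
    fix x :: "real^'n"
    define y where "y = \<theta>0 \<bullet> x"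
    have "exp (- y - c) * (- tanh y - (tanh y)\<^sup>2) = - (exp (-c) * tanh y * (exp (- y) * (1 + tanh y)))"
      by (simp add: exp_diff exp_minus power2_eq_square field_simps)
    also have "\<dots> = - (exp (-c) * tanh y * (exp y * (1 - tanh y)))" by (simp add: tanh_exp_id)
    also have "\<dots> = - (exp (y - c) * (tanh y - (tanh y)\<^sup>2))"
      by (simp add: exp_diff exp_minus power2_eq_square field_simps)
    finally show "exp (\<theta>0 \<bullet> - x - c) * (tanh (\<theta>0 \<bullet> - x) - (tanh (\<theta>0 \<bullet> - x))\<^sup>2)
        = - (exp (\<theta>0 \<bullet> x - c) * (tanh (\<theta>0 \<bullet> x) - (tanh (\<theta>0 \<bullet> x))\<^sup>2))"
      by (simp add: y_def)
  qed
  finally show ?thesis .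
qed

lemma int_tlin: "integrable (gauss_Id \<mu>) (\<lambda>x. tanh (\<theta> \<bullet> x) * (h \<bullet> x))" for \<mu> \<theta> h :: "real^'n::finite"
  by (rule int_lin) (auto simp: tanh_abs_le)

lemma int_tanh: "integrable (gauss_Id \<mu>) (\<lambda>x. tanh (\<theta> \<bullet> x))" for \<mu> \<theta> :: "real^'n::finite"
  by (rule int_bounded[where D=1]) (auto simp: tanh_abs_le)

lemma int_sech: "integrable (gauss_Id \<mu>) (\<lambda>x. 1 - (tanh (\<theta> \<bullet> x))\<^sup>2)" for \<mu> \<theta> :: "real^'n::finite"
  by (rule int_bounded[where D=1]) (use tanh_sq_le in auto)

lemma int_tanh2: "integrable (gauss_Id \<mu>) (\<lambda>x. (tanh (\<theta> \<bullet> x))\<^sup>2)" for \<mu> \<theta> :: "real^'n::finite"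
  by (rule int_bounded[where D=1]) (use tanh_sq_le in auto)

lemma stein_full:
  fixes \<mu> \<theta> h :: "real^'n::finite"
  shows "integral\<^sup>L (gauss_Id \<mu>) (\<lambda>x. tanh (\<theta> \<bullet> x) * (h \<bullet> x))
       = (\<theta> \<bullet> h) * integral\<^sup>L (gauss_Id \<mu>) (\<lambda>x. 1 - (tanh (\<theta> \<bullet> x))\<^sup>2)
         + (h \<bullet> \<mu>) * integral\<^sup>L (gauss_Id \<mu>) (\<lambda>x. tanh (\<theta> \<bullet> x))"
proof -
  have "integral\<^sup>L (gauss_Id \<mu>) (\<lambda>x. tanh (\<theta> \<bullet> x) * (h \<bullet> x))
      = integral\<^sup>L (gauss_Id \<mu>) (\<lambda>x. tanh (\<theta> \<bullet> x) * (h \<bullet> (x - \<mu>)) + (h \<bullet> \<mu>) * tanh (\<theta> \<bullet> x))"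
    by (rule Bochner_Integration.integral_cong) (simp_all add: inner_diff_right algebra_simps)
  also have "\<dots> = integral\<^sup>L (gauss_Id \<mu>) (\<lambda>x. tanh (\<theta> \<bullet> x) * (h \<bullet> (x - \<mu>))) + (h \<bullet> \<mu>) * integral\<^sup>L (gauss_Id \<mu>) (\<lambda>x. tanh (\<theta> \<bullet> x))"
  proof (subst Bochner_Integration.integral_add)
    show "integrable (gauss_Id \<mu>) (\<lambda>x. tanh (\<theta> \<bullet> x) * (h \<bullet> (x - \<mu>)))"
    proof -
      have "integrable (gauss_Id \<mu>) (\<lambda>x. tanh (\<theta> \<bullet> x) * (h \<bullet> x) - (h \<bullet> \<mu>) * tanh (\<theta> \<bullet> x))"
        by (intro Bochner_Integration.integrable_diff Bochner_Integration.integrable_mult_right int_tlin int_tanh)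
      then show ?thesis by (simp add: inner_diff_right algebra_simps)
    qed
  qed (auto intro: int_tanh)
  also have "\<dots> = (\<theta> \<bullet> h) * integral\<^sup>L (gauss_Id \<mu>) (\<lambda>x. 1 - (tanh (\<theta> \<bullet> x))\<^sup>2)
         + (h \<bullet> \<mu>) * integral\<^sup>L (gauss_Id \<mu>) (\<lambda>x. tanh (\<theta> \<bullet> x))"
    by (simp add: stein)
  finally show ?thesis .
qed

lemma fixed_point:
  fixes \<theta>0 h :: "real^'n::finite"
  shows "integral\<^sup>L (gauss_Id \<theta>0) (\<lambda>x. tanh (\<theta>0 \<bullet> x) * (h \<bullet> x)) = \<theta>0 \<bullet> h"
proof -
  let ?E = "integral\<^sup>L (gauss_Id \<theta>0)"
  have "?E (\<lambda>x. 1 - (tanh (\<theta>0 \<bullet> x))\<^sup>2) + ?E (\<lambda>x. tanh (\<theta>0 \<bullet> x))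
      = ?E (\<lambda>x. 1 + (tanh (\<theta>0 \<bullet> x) - (tanh (\<theta>0 \<bullet> x))\<^sup>2))"
    by (subst Bochner_Integration.integral_add[symmetric]) (auto intro!: int_sech int_tanh Bochner_Integration.integral_cong)
  also have "\<dots> = ?E (\<lambda>x. 1) + ?E (\<lambda>x. tanh (\<theta>0 \<bullet> x) - (tanh (\<theta>0 \<bullet> x))\<^sup>2)"
    by (intro Bochner_Integration.integral_add int_one Bochner_Integration.integrable_diff int_tanh int_tanh2)
  also have "\<dots> = 1" by (simp only: nishimori E_one)
  finally have "?E (\<lambda>x. 1 - (tanh (\<theta>0 \<bullet> x))\<^sup>2) + ?E (\<lambda>x. tanh (\<theta>0 \<bullet> x)) = 1" .
  moreover have "?E (\<lambda>x. tanh (\<theta>0 \<bullet> x) * (h \<bullet> x))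
     = (\<theta>0 \<bullet> h) * ?E (\<lambda>x. 1 - (tanh (\<theta>0 \<bullet> x))\<^sup>2) + (h \<bullet> \<theta>0) * ?E (\<lambda>x. tanh (\<theta>0 \<bullet> x))"
    by (rule stein_full)
  ultimately show ?thesis
    by (simp only: inner_commute[of h \<theta>0] distrib_left[symmetric] mult_1_right)
qed

lemma lncosh_nonneg: "0 \<le> ln (cosh (y::real))"
  using cosh_real_ge_1[of y] by simp

lemma cosh_le_exp_abs: "cosh (y::real) \<le> exp \<bar>y\<bar>"
proof -
  have "exp (- \<bar>y\<bar>) \<le> exp \<bar>y\<bar>" by simp
  then have "(exp y + exp (- y)) / 2 \<le> exp \<bar>y\<bar>" by (cases "y \<ge> 0") auto
  then show ?thesis by (simp add: cosh_def)
qed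

lemma lncosh_le: "ln (cosh (y::real)) \<le> \<bar>y\<bar>"
proof -
  have "ln (cosh y) \<le> ln (exp \<bar>y\<bar>)"
    using cosh_le_exp_abs[of y] by (subst ln_le_cancel_iff) auto
  then show ?thesis by simp
qed

lemma int_lc: "integrable (gauss_Id \<mu>) (\<lambda>x. ln (cosh (\<theta> \<bullet> x)))" for \<mu> \<theta> :: "real^'n::finite"
proof (rule int_bound[where C=1 and D=0 and w=\<theta>])
  show "(\<lambda>x. ln (cosh (\<theta> \<bullet> x))) \<in> borel_measurable borel"
    by (intro cont_meas continuous_intros) auto
  fix x
  show "\<bar>ln (cosh (\<theta> \<bullet> x))\<bar> \<le> 1 * exp \<bar>\<theta> \<bullet> x\<bar> + 0"
    using lncosh_nonneg[of "\<theta> \<bullet> x"] lncosh_le[of "\<theta> \<bullet> x"] abs_le_exp_abs[of "\<theta> \<bullet> x"] by simp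
qed

lemma int_xx: "integrable (gauss_Id \<mu>) (\<lambda>x. x \<bullet> x)" for \<mu> :: "real^'n::finite"
proof -
  have "integrable (gauss_Id \<mu>) (\<lambda>x. \<Sum>i\<in>UNIV. (axis i 1 \<bullet> x)\<^sup>2)"
    by (intro Bochner_Integration.integrable_sum int_sq)
  moreover have "(\<Sum>i\<in>UNIV. (axis i 1 \<bullet> x)\<^sup>2) = x \<bullet> x" for x :: "real^'n"
    by (simp add: inner_axis' inner_vec_def[of x x] power2_eq_square)
  ultimately show ?thesis by simp
qed

lemma deriv_from_bound:
  fixes F :: "real^'n::finite \<Rightarrow> real"
  assumes lin: "linear L" and bd: "\<And>h. \<bar>F (x + h) - F x - L h\<bar> \<le> K * (norm h)\<^sup>2"
  shows "(F has_derivative L) (at x)"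
  unfolding has_derivative_iff_norm
proof
  show "bounded_linear L" using lin by (simp add: linear_conv_bounded_linear)
  show "((\<lambda>y. norm (F y - F x - L (y - x)) / norm (y - x)) \<longlongrightarrow> 0) (at x)"
  proof (rule Lim_null_comparison)
    show "\<forall>\<^sub>F y in at x. norm (norm (F y - F x - L (y - x)) / norm (y - x)) \<le> K * norm (y - x)"
    proof (intro always_eventually allI)
      fix y
      show "norm (norm (F y - F x - L (y - x)) / norm (y - x)) \<le> K * norm (y - x)"
      proof (cases "y = x")
        case True then show ?thesis by simp
      next
        case False
        then have n: "0 < norm (y - x)" by simp
        have "\<bar>F y - F x - L (y - x)\<bar> \<le> K * (norm (y - x))\<^sup>2"
          using bd[of "y - x"] by simp
        then show ?thesis using n by (simp add: divide_le_eq power2_eq_square mult.assoc)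
      qed
    qed
    show "((\<lambda>y. K * norm (y - x)) \<longlongrightarrow> 0) (at x)"
    proof -
      have "((\<lambda>y. K * norm (y - x)) \<longlongrightarrow> K * norm (x - x)) (at x)"
        by (intro tendsto_intros)
      then show ?thesis by simp
    qed
  qed
qed

definition Dn :: "real^'n::finite \<Rightarrow> real^'n \<Rightarrow> real^'n \<Rightarrow> real" where
  "Dn \<theta>0 \<theta> h = \<theta> \<bullet> h - integral\<^sup>L (gauss_Id \<theta>0) (\<lambda>x. tanh (\<theta> \<bullet> x) * (h \<bullet> x))"

lemma Dn_linear: "linear (Dn \<theta>0 \<theta>)"
proof (rule linearI)
  fix h1 h2 :: "real^'a" and r :: real
  show "Dn \<theta>0 \<theta> (h1 + h2) = Dn \<theta>0 \<theta> h1 + Dn \<theta>0 \<theta> h2"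
  proof -
    have "integral\<^sup>L (gauss_Id \<theta>0) (\<lambda>x. tanh (\<theta> \<bullet> x) * ((h1 + h2) \<bullet> x))
        = integral\<^sup>L (gauss_Id \<theta>0) (\<lambda>x. tanh (\<theta> \<bullet> x) * (h1 \<bullet> x) + tanh (\<theta> \<bullet> x) * (h2 \<bullet> x))"
      by (simp add: inner_add_left distrib_left)
    also have "\<dots> = integral\<^sup>L (gauss_Id \<theta>0) (\<lambda>x. tanh (\<theta> \<bullet> x) * (h1 \<bullet> x)) + integral\<^sup>L (gauss_Id \<theta>0) (\<lambda>x. tanh (\<theta> \<bullet> x) * (h2 \<bullet> x))"
      by (intro Bochner_Integration.integral_add int_tlin)
    finally show ?thesis by (simp add: Dn_def inner_add_right)
  qed
  show "Dn \<theta>0 \<theta> (r *\<^sub>R h1) = r *\<^sub>R Dn \<theta>0 \<theta> h1"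
  proof -
    have "integral\<^sup>L (gauss_Id \<theta>0) (\<lambda>x. tanh (\<theta> \<bullet> x) * ((r *\<^sub>R h1) \<bullet> x))
        = integral\<^sup>L (gauss_Id \<theta>0) (\<lambda>x. r * (tanh (\<theta> \<bullet> x) * (h1 \<bullet> x)))"
      by (simp add: algebra_simps)
    also have "\<dots> = r * integral\<^sup>L (gauss_Id \<theta>0) (\<lambda>x. tanh (\<theta> \<bullet> x) * (h1 \<bullet> x))"
      by simp
    finally show ?thesis by (simp add: Dn_def algebra_simps)
  qed
qed

lemma N_deriv: "(N_inf \<theta>0 has_derivative Dn \<theta>0 \<theta>) (at \<theta>)" for \<theta>0 \<theta> :: "real^'n::finite"
proof (rule deriv_from_bound[OF Dn_linear])
  let ?E = "integral\<^sup>L (gauss_Id \<theta>0)"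
  fix h :: "real^'n"
  define K where "K = ?E (\<lambda>x. x \<bullet> x)"
  have "N_inf \<theta>0 (\<theta> + h) - N_inf \<theta>0 \<theta> - Dn \<theta>0 \<theta> h
     = h \<bullet> h / 2 - (?E (\<lambda>x. ln (cosh ((\<theta> + h) \<bullet> x))) - ?E (\<lambda>x. ln (cosh (\<theta> \<bullet> x))) - ?E (\<lambda>x. tanh (\<theta> \<bullet> x) * (h \<bullet> x)))"
    by (simp add: N_inf_def Dn_def inner_add_left inner_add_right inner_commute[of h \<theta>] field_simps)
  also have "?E (\<lambda>x. ln (cosh ((\<theta> + h) \<bullet> x))) - ?E (\<lambda>x. ln (cosh (\<theta> \<bullet> x))) - ?E (\<lambda>x. tanh (\<theta> \<bullet> x) * (h \<bullet> x))
      = ?E (\<lambda>x. ln (cosh (\<theta> \<bullet> x + h \<bullet> x)) - ln (cosh (\<theta> \<bullet> x)) - (h \<bullet> x) * tanh (\<theta> \<bullet> x))"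
  proof -
    have "?E (\<lambda>x. ln (cosh (\<theta> \<bullet> x + h \<bullet> x)) - ln (cosh (\<theta> \<bullet> x)) - (h \<bullet> x) * tanh (\<theta> \<bullet> x))
       = ?E (\<lambda>x. (ln (cosh ((\<theta> + h) \<bullet> x)) - ln (cosh (\<theta> \<bullet> x))) - tanh (\<theta> \<bullet> x) * (h \<bullet> x))"
      by (rule Bochner_Integration.integral_cong) (simp_all add: inner_add_left mult.commute)
    also have "\<dots> = ?E (\<lambda>x. ln (cosh ((\<theta> + h) \<bullet> x)) - ln (cosh (\<theta> \<bullet> x))) - ?E (\<lambda>x. tanh (\<theta> \<bullet> x) * (h \<bullet> x))"
      by (intro Bochner_Integration.integral_diff Bochner_Integration.integrable_diff int_lc int_tlin)
    also have "\<dots> = ?E (\<lambda>x. ln (cosh ((\<theta> + h) \<bullet> x))) - ?E (\<lambda>x. ln (cosh (\<theta> \<bullet> x))) - ?E (\<lambda>x. tanh (\<theta> \<bullet> x) * (h \<bullet> x))"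
      by (subst Bochner_Integration.integral_diff) (auto intro: int_lc)
    finally show ?thesis by simp
  qed
  finally have eq: "N_inf \<theta>0 (\<theta> + h) - N_inf \<theta>0 \<theta> - Dn \<theta>0 \<theta> h
     = h \<bullet> h / 2 - ?E (\<lambda>x. ln (cosh (\<theta> \<bullet> x + h \<bullet> x)) - ln (cosh (\<theta> \<bullet> x)) - (h \<bullet> x) * tanh (\<theta> \<bullet> x))" .
  have b: "\<bar>?E (\<lambda>x. ln (cosh (\<theta> \<bullet> x + h \<bullet> x)) - ln (cosh (\<theta> \<bullet> x)) - (h \<bullet> x) * tanh (\<theta> \<bullet> x))\<bar>
      \<le> ?E (\<lambda>x. (norm h)\<^sup>2 * (x \<bullet> x))"
  proof (rule E_abs_le)
    show "integrable (gauss_Id \<theta>0) (\<lambda>x. ln (cosh (\<theta> \<bullet> x + h \<bullet> x)) - ln (cosh (\<theta> \<bullet> x)) - (h \<bullet> x) * tanh (\<theta> \<bullet> x))"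
    proof -
      have "integrable (gauss_Id \<theta>0) (\<lambda>x. ln (cosh ((\<theta> + h) \<bullet> x)) - ln (cosh (\<theta> \<bullet> x)) - tanh (\<theta> \<bullet> x) * (h \<bullet> x))"
        by (intro Bochner_Integration.integrable_diff int_lc int_tlin)
      then show ?thesis by (simp add: inner_add_left mult.commute)
    qed
    show "integrable (gauss_Id \<theta>0) (\<lambda>x. (norm h)\<^sup>2 * (x \<bullet> x))"
      by (intro Bochner_Integration.integrable_mult_right int_xx)
    fix x :: "real^'n"
    have "\<bar>ln (cosh (\<theta> \<bullet> x + h \<bullet> x)) - ln (cosh (\<theta> \<bullet> x)) - (h \<bullet> x) * tanh (\<theta> \<bullet> x)\<bar> \<le> 1 * (h \<bullet> x)\<^sup>2"
      by (rule taylor_lncosh)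
    also have "\<dots> \<le> (norm h * norm x)\<^sup>2"
      using Cauchy_Schwarz_ineq2[of h x] by (simp add: abs_le_square_iff[symmetric])
    also have "\<dots> = (norm h)\<^sup>2 * (x \<bullet> x)"
      by (simp add: power_mult_distrib dot_square_norm)
    finally show "\<bar>ln (cosh (\<theta> \<bullet> x + h \<bullet> x)) - ln (cosh (\<theta> \<bullet> x)) - (h \<bullet> x) * tanh (\<theta> \<bullet> x)\<bar> \<le> (norm h)\<^sup>2 * (x \<bullet> x)" .
  qed
  have "\<bar>N_inf \<theta>0 (\<theta> + h) - N_inf \<theta>0 \<theta> - Dn \<theta>0 \<theta> h\<bar> \<le> \<bar>h \<bullet> h / 2\<bar> + (norm h)\<^sup>2 * K"
    unfolding eq using b by (simp add: K_def abs_triangle_ineq4[THEN order_trans])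
  also have "\<dots> = (1/2 + K) * (norm h)\<^sup>2"
    by (simp add: dot_square_norm algebra_simps)
  finally show "\<bar>N_inf \<theta>0 (\<theta> + h) - N_inf \<theta>0 \<theta> - Dn \<theta>0 \<theta> h\<bar> \<le> (1/2 + K) * (norm h)\<^sup>2" .
qed

lemma Theta1_neg:
  fixes \<theta> :: "real^'n::{finite,linorder}"
  assumes "\<theta> \<in> Theta1" shows "- \<theta> \<notin> Theta1"
proof
  assume "- \<theta> \<in> Theta1"
  then obtain k' where k': "(- \<theta>) $ k' > 0" "\<forall>j. j < k' \<longrightarrow> (- \<theta>) $ j = 0"
    unfolding Theta1_def by blast
  from assms obtain k where k: "\<theta> $ k > 0" "\<forall>j. j < k \<longrightarrow> \<theta> $ j = 0"
    unfolding Theta1_def by blast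
  show False
  proof (cases k k' rule: linorder_cases)
    case less then show ?thesis using k k' by auto
  next
    case equal then show ?thesis using k k' by auto
  next
    case greater then show ?thesis using k k' by auto
  qed
qed

lemma Theta1_nz: "\<theta> \<in> Theta1 \<Longrightarrow> \<theta> \<noteq> 0"
  unfolding Theta1_def by auto

lemma int_cosh: "integrable (gauss_Id \<mu>) (\<lambda>x. cosh (\<theta> \<bullet> x))" for \<mu> \<theta> :: "real^'n::finite"
proof (rule int_bound[where C=1 and D=0 and w=\<theta>])
  show "(\<lambda>x. cosh (\<theta> \<bullet> x)) \<in> borel_measurable borel"
    by (intro cont_meas continuous_intros)
  fix x
  show "\<bar>cosh (\<theta> \<bullet> x)\<bar> \<le> 1 * exp \<bar>\<theta> \<bullet> x\<bar> + 0"
    using cosh_le_exp_abs[of "\<theta> \<bullet> x"] by simp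
qed

lemma int_tcosh: "integrable (gauss_Id \<mu>) (\<lambda>x. tanh (v \<bullet> x) * cosh (\<theta> \<bullet> x))" for \<mu> \<theta> v :: "real^'n::finite"
proof (rule int_bound[where C=1 and D=0 and w=\<theta>])
  show "(\<lambda>x. tanh (v \<bullet> x) * cosh (\<theta> \<bullet> x)) \<in> borel_measurable borel"
    by (intro cont_meas continuous_intros) (auto simp: cosh_pos_real[THEN less_imp_neq, symmetric])
  fix x
  have "\<bar>tanh (v \<bullet> x) * cosh (\<theta> \<bullet> x)\<bar> \<le> 1 * cosh (\<theta> \<bullet> x)"
    unfolding abs_mult by (intro mult_mono tanh_abs_le) auto
  then show "\<bar>tanh (v \<bullet> x) * cosh (\<theta> \<bullet> x)\<bar> \<le> 1 * exp \<bar>\<theta> \<bullet> x\<bar> + 0"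
    using cosh_le_exp_abs[of "\<theta> \<bullet> x"] by simp
qed

lemma E_cosh0: "integral\<^sup>L (gauss_Id 0) (\<lambda>x. cosh (\<theta> \<bullet> x)) = exp (\<theta> \<bullet> \<theta> / 2)"
  for \<theta> :: "real^'n::finite"
proof -
  have "integral\<^sup>L (gauss_Id 0) (\<lambda>x. cosh (\<theta> \<bullet> x))
      = integral\<^sup>L (gauss_Id 0) (\<lambda>x. (exp (\<theta> \<bullet> x) + exp ((- \<theta>) \<bullet> x)) / 2)"
    by (rule Bochner_Integration.integral_cong) (simp_all add: cosh_def)
  also have "\<dots> = (integral\<^sup>L (gauss_Id 0) (\<lambda>x. exp (\<theta> \<bullet> x)) + integral\<^sup>L (gauss_Id 0) (\<lambda>x. exp ((- \<theta>) \<bullet> x))) / 2"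
    by (simp only: integral_divide_zero Bochner_Integration.integral_add[OF int_exp int_exp])
  also have "\<dots> = exp (\<theta> \<bullet> \<theta> / 2)"
    by (simp only: E_exp0) simp
  finally show ?thesis .
qed

lemma ET_one:
  fixes \<theta>0 \<theta> :: "real^'n::finite"
  shows "integral\<^sup>L (gauss_Id \<theta>0) (\<lambda>x. exp (\<theta>0 \<bullet> \<theta>0 / 2 - \<theta> \<bullet> \<theta> / 2) * cosh (\<theta> \<bullet> x) / cosh (\<theta>0 \<bullet> x)) = 1"
proof -
  define c0 c where "c0 = \<theta>0 \<bullet> \<theta>0 / 2" and "c = \<theta> \<bullet> \<theta> / 2"
  have "integral\<^sup>L (gauss_Id \<theta>0) (\<lambda>x. exp (c0 - c) * cosh (\<theta> \<bullet> x) / cosh (\<theta>0 \<bullet> x))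
      = integral\<^sup>L (gauss_Id 0) (\<lambda>x. exp (\<theta>0 \<bullet> x - c0) * (exp (c0 - c) * cosh (\<theta> \<bullet> x) / cosh (\<theta>0 \<bullet> x)))"
    unfolding c0_def by (rule E_tilt0) (intro cont_meas continuous_intros, auto simp: cosh_pos_real[THEN less_imp_neq, symmetric])
  also have "\<dots> = integral\<^sup>L (gauss_Id 0) (\<lambda>x. exp (- c) * cosh (\<theta> \<bullet> x) + exp (- c) * (tanh (\<theta>0 \<bullet> x) * cosh (\<theta> \<bullet> x)))"
  proof (rule Bochner_Integration.integral_cong)
    fix x :: "real^'n"
    have "exp (\<theta>0 \<bullet> x) = cosh (\<theta>0 \<bullet> x) + sinh (\<theta>0 \<bullet> x)" by (simp add: cosh_plus_sinh)
    then have "exp (\<theta>0 \<bullet> x - c0) * (exp (c0 - c) * cosh (\<theta> \<bullet> x) / cosh (\<theta>0 \<bullet> x))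
        = exp (- c) * ((cosh (\<theta>0 \<bullet> x) + sinh (\<theta>0 \<bullet> x)) * cosh (\<theta> \<bullet> x) / cosh (\<theta>0 \<bullet> x))"
      by (simp add: exp_diff exp_minus field_simps)
    also have "\<dots> = exp (- c) * cosh (\<theta> \<bullet> x) + exp (- c) * (tanh (\<theta>0 \<bullet> x) * cosh (\<theta> \<bullet> x))"
      using cosh_pos_real[of "\<theta>0 \<bullet> x"] by (simp add: tanh_def field_simps)
    finally show "exp (\<theta>0 \<bullet> x - c0) * (exp (c0 - c) * cosh (\<theta> \<bullet> x) / cosh (\<theta>0 \<bullet> x))
        = exp (- c) * cosh (\<theta> \<bullet> x) + exp (- c) * (tanh (\<theta>0 \<bullet> x) * cosh (\<theta> \<bullet> x))" .
  qed simp
  also have "\<dots> = exp (- c) * integral\<^sup>L (gauss_Id 0) (\<lambda>x. cosh (\<theta> \<bullet> x))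
       + exp (- c) * integral\<^sup>L (gauss_Id 0) (\<lambda>x. tanh (\<theta>0 \<bullet> x) * cosh (\<theta> \<bullet> x))"
    by (simp add: Bochner_Integration.integral_add int_cosh int_tcosh)
  also have "integral\<^sup>L (gauss_Id 0) (\<lambda>x. tanh (\<theta>0 \<bullet> x) * cosh (\<theta> \<bullet> x)) = 0"
    by (rule E_odd) (intro cont_meas continuous_intros, auto simp: cosh_pos_real[THEN less_imp_neq, symmetric])
  also have "integral\<^sup>L (gauss_Id 0) (\<lambda>x. cosh (\<theta> \<bullet> x)) = exp c"
    unfolding c_def by (rule E_cosh0)
  finally show ?thesis by (simp add: c0_def c_def exp_minus)
qed

lemma N_min:
  fixes \<theta>0 \<theta> :: "real^'n::{finite,linorder}"
  assumes t0: "\<theta>0 \<in> Theta1" and t: "\<theta> \<in> Theta1" and ne: "\<theta> \<noteq> \<theta>0"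
  shows "N_inf \<theta>0 \<theta>0 < N_inf \<theta>0 \<theta>"
proof -
  let ?E = "integral\<^sup>L (gauss_Id \<theta>0)"
  define c0 c where "c0 = \<theta>0 \<bullet> \<theta>0 / 2" and "c = \<theta> \<bullet> \<theta> / 2"
  define T where "T = (\<lambda>x. exp (c0 - c) * cosh (\<theta> \<bullet> x) / cosh (\<theta>0 \<bullet> x))"
  define L where "L = (\<lambda>x. (c0 - c) + ln (cosh (\<theta> \<bullet> x)) - ln (cosh (\<theta>0 \<bullet> x)))"
  have Tpos: "0 < T x" for x unfolding T_def by simp
  have lnT: "ln (T x) = L x" for x
    unfolding T_def L_def by (simp add: ln_div ln_mult)
  have ET: "?E T = 1" unfolding T_def c0_def c_def by (rule ET_one)
  have contT: "continuous_on UNIV T" unfolding T_def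
    by (intro continuous_intros) (auto simp: cosh_pos_real[THEN less_imp_neq, symmetric])
  have intT: "integrable (gauss_Id \<theta>0) T"
  proof (rule int_bound[where C="exp (c0 - c)" and D=0 and w=\<theta>])
    show "T \<in> borel_measurable borel" by (rule cont_meas[OF contT])
    fix x
    have "T x \<le> exp (c0 - c) * cosh (\<theta> \<bullet> x) / 1" unfolding T_def
      using cosh_real_ge_1[of "\<theta>0 \<bullet> x"] by (intro divide_left_mono) auto
    also have "\<dots> \<le> exp (c0 - c) * exp \<bar>\<theta> \<bullet> x\<bar>"
      using cosh_le_exp_abs[of "\<theta> \<bullet> x"] by simp
    finally show "\<bar>T x\<bar> \<le> exp (c0 - c) * exp \<bar>\<theta> \<bullet> x\<bar> + 0" using Tpos[of x] by simp
  qed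
  have intL: "integrable (gauss_Id \<theta>0) L"
    unfolding L_def by (intro Bochner_Integration.integrable_diff Bochner_Integration.integrable_add int_one int_lc)
  have EL: "?E L = (c0 - c) + ?E (\<lambda>x. ln (cosh (\<theta> \<bullet> x))) - ?E (\<lambda>x. ln (cosh (\<theta>0 \<bullet> x)))"
    unfolding L_def
    by (simp add: Bochner_Integration.integral_diff Bochner_Integration.integral_add int_one int_lc E_one
        Bochner_Integration.integrable_add)
  define f where "f = (\<lambda>x. T x - 1 - L x)"
  have Ef: "?E f = N_inf \<theta>0 \<theta> - N_inf \<theta>0 \<theta>0"
  proof -
    have "?E f = ?E T - ?E (\<lambda>_. 1) - ?E L"
      unfolding f_def
      by (simp add: Bochner_Integration.integral_diff intT intL int_one Bochner_Integration.integrable_diff)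
    then show ?thesis
      using ET EL E_one[of \<theta>0] by (simp add: N_inf_def c0_def c_def)
  qed
  have fnn: "0 \<le> f x" for x
    using ln_le_minus_one[OF Tpos[of x]] unfolding f_def lnT by simp
  have ex: "\<exists>x0. T x0 \<noteq> 1"
  proof (rule ccontr)
    assume "\<not> (\<exists>x0. T x0 \<noteq> 1)"
    then have T1: "\<And>x. T x = 1" by blast
    from T1[of 0] have "exp (c0 - c) = 1" by (simp add: T_def)
    then have cc: "c0 = c" by simp
    have "cosh (\<theta> \<bullet> x) = cosh (\<theta>0 \<bullet> x)" for x
      using T1[of x] cc by (simp add: T_def)
    then have ab: "\<bar>\<theta> \<bullet> x\<bar> = \<bar>\<theta>0 \<bullet> x\<bar>" for x by simp
    from ab[of \<theta>] have "\<theta>0 \<bullet> \<theta> = \<theta> \<bullet> \<theta> \<or> \<theta>0 \<bullet> \<theta> = - (\<theta> \<bullet> \<theta>)"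
      by (auto simp: abs_if split: if_splits)
    then show False
    proof
      assume h: "\<theta>0 \<bullet> \<theta> = \<theta> \<bullet> \<theta>"
      have "(\<theta> - \<theta>0) \<bullet> (\<theta> - \<theta>0) = \<theta> \<bullet> \<theta> - 2 * (\<theta>0 \<bullet> \<theta>) + \<theta>0 \<bullet> \<theta>0"
        by (simp add: inner_diff_left inner_diff_right inner_commute)
      also have "\<dots> = 0" using h cc by (simp add: c0_def c_def)
      finally have "\<theta> = \<theta>0" by simp
      with ne show False by simp
    next
      assume h: "\<theta>0 \<bullet> \<theta> = - (\<theta> \<bullet> \<theta>)"
      have "(\<theta> + \<theta>0) \<bullet> (\<theta> + \<theta>0) = \<theta> \<bullet> \<theta> + 2 * (\<theta>0 \<bullet> \<theta>) + \<theta>0 \<bullet> \<theta>0"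
        by (simp add: inner_add_left inner_add_right inner_commute)
      also have "\<dots> = 0" using h cc by (simp add: c0_def c_def)
      finally have "\<theta> = - \<theta>0" by (simp add: add_eq_0_iff)
      with Theta1_neg[OF t0] t show False by simp
    qed
  qed
  then obtain x0 where x0: "T x0 \<noteq> 1" by blast
  have fx0: "0 < f x0"
  proof -
    have "ln (T x0) \<noteq> T x0 - 1" using ln_eq_minus_one[OF Tpos[of x0]] x0 by blast
    with ln_le_minus_one[OF Tpos[of x0]] show ?thesis unfolding f_def lnT by simp
  qed
  have "0 < ?E f"
  proof (rule E_pos[where f=f and ?x0.0=x0])
    show "\<And>x. 0 \<le> f x" by (rule fnn)
    show "0 < f x0" by (rule fx0)
    show "continuous_on UNIV f" unfolding f_def L_def
      by (intro continuous_intros contT) (auto simp: cosh_pos_real[THEN less_imp_neq, symmetric])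
    show "integrable (gauss_Id \<theta>0) f" unfolding f_def
      by (intro Bochner_Integration.integrable_diff intT intL int_one)
  qed
  with Ef show ?thesis by simp
qed

lemma k_pos:
  assumes u: "0 < (u::real)"
  shows "u * (1 - (tanh u)\<^sup>2) < tanh u"
proof -
  define k where "k = (\<lambda>v::real. tanh v - v * (1 - (tanh v)\<^sup>2))"
  have dk: "DERIV k v :> 2 * v * tanh v * (1 - (tanh v)\<^sup>2)" for v
  proof -
    have "DERIV k v :> (1 - (tanh v)\<^sup>2) - (1 * (1 - (tanh v)\<^sup>2) + v * (- 2 * tanh v * (1 - (tanh v)\<^sup>2)))"
    proof -
      have d1: "DERIV (\<lambda>z. z * (1 - (tanh z)\<^sup>2)) v :> 1 * (1 - (tanh v)\<^sup>2) + v * (- 2 * tanh v * (1 - (tanh v)\<^sup>2))"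
        using DERIV_mult[OF DERIV_ident deriv_tanh', of v] by (simp add: algebra_simps)
      show ?thesis unfolding k_def by (rule DERIV_diff[OF deriv_tanh d1])
    qed
    then show ?thesis by (simp add: algebra_simps)
  qed
  have "k 0 < k u"
  proof (rule DERIV_pos_imp_increasing_open[OF u])
    fix x :: real assume x: "0 < x" "x < u"
    have "0 < 1 - (tanh x)\<^sup>2"
      using tanh_real_bounds[of x] by (simp add: abs_square_less_1 abs_less_iff)
    then show "\<exists>y. DERIV k x :> y \<and> 0 < y"
      using x dk by (intro exI[of _ "2 * x * tanh x * (1 - (tanh x)\<^sup>2)"]) auto
  next
    show "continuous_on {0..u} k" unfolding k_def
      by (intro continuous_intros) (auto simp: cosh_pos_real[THEN less_imp_neq, symmetric])
  qed
  then show ?thesis by (simp add: k_def)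
qed

lemma ratio_dec:
  assumes p: "0 < (p::real)" and pq: "p < q"
  shows "tanh q / q < tanh p / p"
proof (rule DERIV_neg_imp_decreasing[OF pq])
  fix x :: real assume x: "p \<le> x" "x \<le> q"
  then have x0: "0 < x" using p by simp
  have "DERIV (\<lambda>v. tanh v / v) x :> ((1 - (tanh x)\<^sup>2) * x - tanh x * 1) / (x * x)"
    using x0 by (intro DERIV_divide deriv_tanh DERIV_ident) simp
  moreover have "((1 - (tanh x)\<^sup>2) * x - tanh x * 1) / (x * x) < 0"
    using k_pos[OF x0] x0 by (intro divide_neg_pos) (auto simp: algebra_simps)
  ultimately show "\<exists>y. DERIV (\<lambda>v. tanh v / v) x :> y \<and> y < 0" by blast
qed

lemma tanh_ineq:
  fixes a b y :: real
  assumes a: "0 < a" and ab: "a < b" and y: "y \<noteq> 0"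
  shows "a * (tanh (b * y) * y) < b * (tanh (a * y) * y)"
proof -
  define z where "z = \<bar>y\<bar>"
  have z: "0 < z" using y by (simp add: z_def)
  have ev: "tanh (c * y) * y = tanh (c * z) * z" for c
    by (cases "y < 0") (auto simp: z_def)
  have "tanh (b * z) / (b * z) < tanh (a * z) / (a * z)"
    using a ab z by (intro ratio_dec) auto
  then have "tanh (b * z) / (b * z) * (a * b * z * z) < tanh (a * z) / (a * z) * (a * b * z * z)"
    using a ab z by (intro mult_strict_right_mono) auto
  then have "a * (tanh (b * z) * z) < b * (tanh (a * z) * z)"
    using a ab z by (simp add: field_simps)
  then show ?thesis by (simp add: ev)
qed

lemma conc_E:
  fixes \<theta>0 :: "real^'n::finite"
  assumes a: "0 < a" and ab: "a < b" and nz: "\<theta>0 \<noteq> 0"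
  shows "a * integral\<^sup>L (gauss_Id \<theta>0) (\<lambda>x. tanh (b * (\<theta>0 \<bullet> x)) * (\<theta>0 \<bullet> x))
       < b * integral\<^sup>L (gauss_Id \<theta>0) (\<lambda>x. tanh (a * (\<theta>0 \<bullet> x)) * (\<theta>0 \<bullet> x))"
proof -
  have int: "integrable (gauss_Id \<theta>0) (\<lambda>x. tanh (c * (\<theta>0 \<bullet> x)) * (\<theta>0 \<bullet> x))" for c
    using int_tlin[of \<theta>0 "c *\<^sub>R \<theta>0" \<theta>0] by simp
  define f where "f = (\<lambda>x. b * (tanh (a * (\<theta>0 \<bullet> x)) * (\<theta>0 \<bullet> x)) - a * (tanh (b * (\<theta>0 \<bullet> x)) * (\<theta>0 \<bullet> x)))"
  have "0 < integral\<^sup>L (gauss_Id \<theta>0) f"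
  proof (rule E_pos[where f=f and ?x0.0=\<theta>0])
    show "continuous_on UNIV f" unfolding f_def
      by (intro continuous_intros) (auto simp: cosh_pos_real[THEN less_imp_neq, symmetric])
    show "0 \<le> f x" for x
    proof (cases "\<theta>0 \<bullet> x = 0")
      case True then show ?thesis by (simp add: f_def)
    next
      case False then show ?thesis using tanh_ineq[OF a ab False] by (simp add: f_def)
    qed
    show "integrable (gauss_Id \<theta>0) f" unfolding f_def
      by (intro Bochner_Integration.integrable_diff Bochner_Integration.integrable_mult_right int)
    show "0 < f \<theta>0" using tanh_ineq[OF a ab, of "\<theta>0 \<bullet> \<theta>0"] nz by (simp add: f_def)
  qed
  also have "integral\<^sup>L (gauss_Id \<theta>0) f = b * integral\<^sup>L (gauss_Id \<theta>0) (\<lambda>x. tanh (a * (\<theta>0 \<bullet> x)) * (\<theta>0 \<bullet> x))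
        - a * integral\<^sup>L (gauss_Id \<theta>0) (\<lambda>x. tanh (b * (\<theta>0 \<bullet> x)) * (\<theta>0 \<bullet> x))"
    unfolding f_def
    by (subst Bochner_Integration.integral_diff) (auto intro!: Bochner_Integration.integrable_mult_right int)
  finally show ?thesis by simp
qed

lemma Theta1_first_nonneg:
  fixes \<theta> :: "real^'n::{finite,linorder}"
  assumes "\<theta> \<in> Theta1"
  shows "0 \<le> \<theta> $ Min UNIV"
proof -
  from assms obtain k where k: "\<theta> $ k > 0" "\<forall>j. j < k \<longrightarrow> \<theta> $ j = 0"
    unfolding Theta1_def by blast
  have le: "Min UNIV \<le> k" by simp
  show ?thesis
  proof (cases "Min UNIV = k")
    case True then show ?thesis using k by simp
  next
    case False
    with le have "Min UNIV < k" by (simp add: order_le_neq_trans)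
    with k show ?thesis by simp
  qed
qed

lemma interior_first_pos:
  fixes \<theta> :: "real^'n::{finite,linorder}"
  assumes "\<theta> \<in> interior Theta1"
  shows "0 < \<theta> $ Min UNIV"
proof (rule ccontr)
  let ?k0 = "Min (UNIV :: 'n set)"
  assume neg: "\<not> 0 < \<theta> $ ?k0"
  from assms obtain e where e: "0 < e" "ball \<theta> e \<subseteq> Theta1"
    by (auto simp: mem_interior)
  define y where "y = \<theta> - (e/2) *\<^sub>R axis ?k0 1"
  have "dist \<theta> y = e / 2" using e by (simp add: y_def dist_norm)
  then have "y \<in> ball \<theta> e" using e by simp
  with e have "y \<in> Theta1" by blast
  then have "0 \<le> y $ ?k0" by (rule Theta1_first_nonneg)
  moreover have "y $ ?k0 < 0" using neg e by (simp add: y_def)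
  ultimately show False by simp
qed

lemma stationary_unique:
  fixes \<theta>0 \<theta> :: "real^'n::{finite,linorder}"
  assumes t0: "\<theta>0 \<in> Theta1" and ti: "\<theta> \<in> interior Theta1" and D: "\<And>h. Dn \<theta>0 \<theta> h = 0"
  shows "\<theta> = \<theta>0"
proof -
  let ?E = "integral\<^sup>L (gauss_Id \<theta>0)"
  let ?k0 = "Min (UNIV :: 'n set)"
  have tpos: "0 < \<theta> $ ?k0" by (rule interior_first_pos[OF ti])
  then have tnz: "\<theta> \<noteq> 0" by auto
  have t0nz: "\<theta>0 \<noteq> 0" by (rule Theta1_nz[OF t0])
  define S where "S = ?E (\<lambda>x. 1 - (tanh (\<theta> \<bullet> x))\<^sup>2)"
  define T where "T = ?E (\<lambda>x. tanh (\<theta> \<bullet> x))"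
  have stat: "\<theta> \<bullet> h = ?E (\<lambda>x. tanh (\<theta> \<bullet> x) * (h \<bullet> x))" for h
    using D[of h] by (simp add: Dn_def)
  have eqh: "\<theta> \<bullet> h = (\<theta> \<bullet> h) * S + (h \<bullet> \<theta>0) * T" for h
    using stat[of h] stein_full[of \<theta>0 \<theta> h] by (simp add: S_def T_def)
  have S1: "S < 1"
  proof -
    have "0 < ?E (\<lambda>x. (tanh (\<theta> \<bullet> x))\<^sup>2)"
    proof (rule E_pos[where ?x0.0=\<theta>])
      show "continuous_on UNIV (\<lambda>x. (tanh (\<theta> \<bullet> x))\<^sup>2)"
        by (intro continuous_intros) (auto simp: cosh_pos_real[THEN less_imp_neq, symmetric])
      show "integrable (gauss_Id \<theta>0) (\<lambda>x. (tanh (\<theta> \<bullet> x))\<^sup>2)" by (rule int_tanh2)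
      show "0 < (tanh (\<theta> \<bullet> \<theta>))\<^sup>2" using tnz by simp
    qed simp
    moreover have "S = 1 - ?E (\<lambda>x. (tanh (\<theta> \<bullet> x))\<^sup>2)"
      unfolding S_def by (subst Bochner_Integration.integral_diff) (auto intro: int_one int_tanh2)
    ultimately show ?thesis by simp
  qed
  define v where "v = (1 - S) *\<^sub>R \<theta> - T *\<^sub>R \<theta>0"
  have "v \<bullet> h = 0" for h
    using eqh[of h] by (simp add: v_def inner_diff_left inner_commute algebra_simps)
  then have "v \<bullet> v = 0" by blast
  then have "v = 0" by simp
  then have "(1 - S) *\<^sub>R \<theta> = T *\<^sub>R \<theta>0" by (simp add: v_def)
  then have "\<theta> = (T / (1 - S)) *\<^sub>R \<theta>0" using S1
    by (metis (no_types, lifting) divide_inverse_commute eq_vector_fraction_iff less_irrefl diff_gt_0_iff_gt)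
  then obtain \<kappa> where th: "\<theta> = \<kappa> *\<^sub>R \<theta>0" by blast
  have "0 \<le> \<theta>0 $ ?k0" by (rule Theta1_first_nonneg[OF t0])
  with tpos th have kpos: "0 < \<kappa>"
    by (auto simp: zero_less_mult_iff)
  have A: "\<kappa> * (\<theta>0 \<bullet> \<theta>0) = ?E (\<lambda>x. tanh (\<kappa> * (\<theta>0 \<bullet> x)) * (\<theta>0 \<bullet> x))"
    using stat[of \<theta>0] by (simp add: th)
  have B: "\<theta>0 \<bullet> \<theta>0 = ?E (\<lambda>x. tanh (1 * (\<theta>0 \<bullet> x)) * (\<theta>0 \<bullet> x))"
    using fixed_point[of \<theta>0 \<theta>0] by simp
  have "\<kappa> = 1"
  proof (rule ccontr)
    assume "\<kappa> \<noteq> 1"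
    then consider "\<kappa> < 1" | "1 < \<kappa>" by linarith
    then show False
    proof cases
      case 1
      from conc_E[OF kpos 1 t0nz] A B show False by simp
    next
      case 2
      from conc_E[OF _ 2 t0nz] A B show False by simp
    qed
  qed
  with th show ?thesis by simp
qed

theorem mainTheorem1:
  fixes \<theta>0 :: "real ^ 'n::{finite,linorder}"
  assumes "\<theta>0 \<in> Theta1"
  shows "(\<forall>\<theta>\<in>interior Theta1. N_inf \<theta>0 differentiable (at \<theta>))
    \<and> (\<forall>\<theta>\<in>Theta1. \<theta> \<noteq> \<theta>0 \<longrightarrow> N_inf \<theta>0 \<theta>0 < N_inf \<theta>0 \<theta>)
    \<and> (\<forall>\<theta>\<in>interior Theta1.
          (N_inf \<theta>0 has_derivative (\<lambda>h. 0)) (at \<theta>) \<longleftrightarrow> \<theta> = \<theta>0)"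
proof (intro conjI ballI impI)
  fix \<theta> :: "real ^ 'n::{finite,linorder}" assume "\<theta> \<in> interior Theta1"
  show "N_inf \<theta>0 differentiable (at \<theta>)"
    using N_deriv[of \<theta>0 \<theta>] by (auto simp: differentiable_def)
next
  fix \<theta> :: "real ^ 'n::{finite,linorder}" assume "\<theta> \<in> Theta1" "\<theta> \<noteq> \<theta>0"
  then show "N_inf \<theta>0 \<theta>0 < N_inf \<theta>0 \<theta>" using N_min[OF assms] by blast
next
  fix \<theta> :: "real ^ 'n::{finite,linorder}" assume ti: "\<theta> \<in> interior Theta1"
  show "(N_inf \<theta>0 has_derivative (\<lambda>h. 0)) (at \<theta>) \<longleftrightarrow> \<theta> = \<theta>0"
  proof
    assume d: "(N_inf \<theta>0 has_derivative (\<lambda>h. 0)) (at \<theta>)"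
    have "Dn \<theta>0 \<theta> = (\<lambda>h. 0)"
      by (rule has_derivative_unique[OF N_deriv d])
    then have "\<And>h. Dn \<theta>0 \<theta> h = 0" by simp
    then show "\<theta> = \<theta>0" by (rule stationary_unique[OF assms ti])
  next
    assume e: "\<theta> = \<theta>0"
    have "Dn \<theta>0 \<theta>0 = (\<lambda>h. 0)"
      by (rule ext) (simp add: Dn_def fixed_point)
    then show "(N_inf \<theta>0 has_derivative (\<lambda>h. 0)) (at \<theta>)"
      using N_deriv[of \<theta>0 \<theta>0] e by simp
  qed
qed

end
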